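(* Let $H=\sum_i h_i$ be the parent Hamiltonian of a quantum circuit $C$ of depth $d$ and lightcone size $\ell$. Then the terms of $H$ can be $\Delta$-colored with $\Delta\le\ell\cdot2^d+1$ colors, i.e. the index set of the terms can be partitioned into $\Delta$ subsets such that no two terms $h_i,h_j$ in the same subset have overlapping supports.
   Context: $C$ consists of $d$ layers of two-qubit gates on $n$ qubits. The parent Hamiltonian is $H=\sum_{i\in[n]}h_i$ with $h_i=C(|1\rangle\langle1|_i\otimes\mathbb I_{[n]\setminus i})C^\dagger$. The lightcone $\mathsf L_i$ of qubit $i$ is the set of qubits reachable from $i$ via gates of $C$ and $\ell=\max_i|\mathsf L_i|$; the support of $h_i$ is contained in $\mathsf L_i$. *)

theory Defs
  imports Main
begin

text \<open>Combinatorial model of a depth-d circuit of two-qubit gates on qubits {0..<n}.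
A circuit is a list of layers (applied in list order); a layer is a set of gates;
a gate is the set of the two qubits it acts on.\<close>

definition valid_layer :: "nat \<Rightarrow> nat set set \<Rightarrow> bool" where
  "valid_layer n G \<longleftrightarrow>
     (\<forall>g\<in>G. card g = 2 \<and> g \<subseteq> {..<n}) \<and>
     (\<forall>g\<in>G. \<forall>g'\<in>G. g \<noteq> g' \<longrightarrow> g \<inter> g' = {})"

definition valid_circuit :: "nat \<Rightarrow> nat set set list \<Rightarrow> bool" where
  "valid_circuit n C \<longleftrightarrow> (\<forall>G\<in>set C. valid_layer n G)"

fun reach :: "nat set set list \<Rightarrow> nat set \<Rightarrow> nat set" where
  "reach [] S = S"
| "reach (G # Gs) S = reach Gs (S \<union> \<Union>{g \<in> G. g \<inter> S \<noteq> {}})"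

definition lightcone :: "nat set set list \<Rightarrow> nat \<Rightarrow> nat set" where
  "lightcone C i = reach C {i}"

definition lightcone_size :: "nat \<Rightarrow> nat set set list \<Rightarrow> nat" where
  "lightcone_size n C = Max ((\<lambda>i. card (lightcone C i)) ` {..<n})"

end

theory Submission
  imports Defs
begin

definition stepG :: "nat set set \<Rightarrow> nat set \<Rightarrow> nat set" where
  "stepG G S = S \<union> \<Union>{g \<in> G. g \<inter> S \<noteq> {}}"

fun bwd :: "nat set set list \<Rightarrow> nat \<Rightarrow> nat set" where
  "bwd [] q = {q}"
| "bwd (G # Gs) q = stepG G (bwd Gs q)"

lemma reach_union: "q \<in> reach C S \<longleftrightarrow> (\<exists>s\<in>S. q \<in> reach C {s})"
proof (induction C arbitrary: S)
  case Nil then show ?case by auto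
next
  case (Cons G Gs)
  have e1: "reach (G # Gs) S = reach Gs (stepG G S)" for S by (simp add: stepG_def)
  have "q \<in> reach (G # Gs) S \<longleftrightarrow> (\<exists>k\<in>stepG G S. q \<in> reach Gs {k})"
    using Cons.IH[of "stepG G S"] e1 by simp
  also have "\<dots> \<longleftrightarrow> (\<exists>s\<in>S. \<exists>k\<in>stepG G {s}. q \<in> reach Gs {k})"
    unfolding stepG_def by blast
  also have "\<dots> \<longleftrightarrow> (\<exists>s\<in>S. q \<in> reach (G # Gs) {s})"
    using Cons.IH e1 by metis
  finally show ?case .
qed

lemma step_sym: "(stepG G {j} \<inter> K \<noteq> {}) \<longleftrightarrow> j \<in> stepG G K"
  unfolding stepG_def by blast

lemma back_iff: "j \<in> bwd C q \<longleftrightarrow> q \<in> reach C {j}"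
proof (induction C arbitrary: j)
  case Nil then show ?case by auto
next
  case (Cons G Gs)
  have "q \<in> reach (G # Gs) {j} \<longleftrightarrow> q \<in> reach Gs (stepG G {j})"
    by (simp add: stepG_def)
  also have "\<dots> \<longleftrightarrow> (\<exists>k\<in>stepG G {j}. k \<in> bwd Gs q)"
    using reach_union Cons by blast
  also have "\<dots> \<longleftrightarrow> j \<in> stepG G (bwd Gs q)"
    using step_sym[of G j "bwd Gs q"] by blast
  finally show ?case by simp
qed

lemma step_local:
  assumes "valid_layer n G"
  shows "finite ({k} \<union> \<Union>{g \<in> G. k \<in> g}) \<and> card ({k} \<union> \<Union>{g \<in> G. k \<in> g}) \<le> 2"
proof (cases "\<exists>g\<in>G. k \<in> g")
  case True
  then obtain g where g: "g \<in> G" "k \<in> g" by blast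
  have "{g \<in> G. k \<in> g} = {g}" using assms g unfolding valid_layer_def by blast
  hence "{k} \<union> \<Union>{g \<in> G. k \<in> g} = g" using g by auto
  moreover have "card g = 2" using assms g unfolding valid_layer_def by blast
  ultimately show ?thesis by (metis card.infinite le_refl zero_neq_numeral)
next
  case False
  hence e: "{k} \<union> \<Union>{g \<in> G. k \<in> g} = {k}" by auto
  show ?thesis unfolding e by simp
qed

lemma step_card:
  assumes "valid_layer n G" "finite K"
  shows "finite (stepG G K) \<and> card (stepG G K) \<le> 2 * card K"
proof -
  have eq: "stepG G K = (\<Union>k\<in>K. {k} \<union> \<Union>{g \<in> G. k \<in> g})"
    unfolding stepG_def by blast
  have fin: "finite (stepG G K)" unfolding eq using assms step_local by blast
  have "card (stepG G K) \<le> (\<Sum>k\<in>K. card ({k} \<union> \<Union>{g \<in> G. k \<in> g}))"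
    unfolding eq by (rule card_UN_le[OF assms(2)])
  also have "\<dots> \<le> (\<Sum>k\<in>K. 2)" by (rule sum_mono) (use step_local[OF assms(1)] in blast)
  finally show ?thesis using fin by simp
qed

lemma back_card:
  assumes "valid_circuit n C"
  shows "finite (bwd C q) \<and> card (bwd C q) \<le> 2 ^ length C"
  using assms
proof (induction C)
  case Nil then show ?case by simp
next
  case (Cons G Gs)
  have vl: "valid_layer n G" and vc: "valid_circuit n Gs"
    using Cons.prems unfolding valid_circuit_def by auto
  have ih: "finite (bwd Gs q) \<and> card (bwd Gs q) \<le> 2 ^ length Gs" using Cons.IH vc by blast
  have "finite (bwd (G#Gs) q) \<and> card (bwd (G#Gs) q) \<le> 2 * card (bwd Gs q)"
    using step_card[OF vl] ih by simp
  then show ?case using ih by simp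
qed

lemma reach_finite:
  assumes "valid_circuit n C" "finite S"
  shows "finite (reach C S)"
  using assms
proof (induction C arbitrary: S)
  case Nil then show ?case by simp
next
  case (Cons G Gs)
  have vl: "valid_layer n G" and vc: "valid_circuit n Gs"
    using Cons.prems unfolding valid_circuit_def by auto
  have "finite (stepG G S)" using step_card[OF vl Cons.prems(2)] by blast
  then show ?case using Cons.IH[OF vc] by (simp add: stepG_def)
qed

lemma greedy:
  fixes adj :: "nat \<Rightarrow> nat \<Rightarrow> bool"
  assumes sym: "\<And>i j. adj i j \<Longrightarrow> adj j i"
    and deg: "\<And>i. i < n \<Longrightarrow> card {j. j < n \<and> j \<noteq> i \<and> adj i j} \<le> D"
  shows "m \<le> n \<Longrightarrow> \<exists>col :: nat \<Rightarrow> nat. (\<forall>i<m. col i < D + 1) \<and>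
           (\<forall>i<m. \<forall>j<m. i \<noteq> j \<and> col i = col j \<longrightarrow> \<not> adj i j)"
proof (induction m)
  case 0 then show ?case by auto
next
  case (Suc m)
  then obtain col where c1: "\<forall>i<m. col i < D + 1"
    and c2: "\<forall>i<m. \<forall>j<m. i \<noteq> j \<and> col i = col j \<longrightarrow> \<not> adj i j" by auto
  define F where "F = col ` {j. j < m \<and> adj m j}"
  have "{j. j < m \<and> adj m j} \<subseteq> {j. j < n \<and> j \<noteq> m \<and> adj m j}" using Suc.prems by auto
  hence "card {j. j < m \<and> adj m j} \<le> D"
  proof -
    assume h: "{j. j < m \<and> adj m j} \<subseteq> {j. j < n \<and> j \<noteq> m \<and> adj m j}"
    have "card {j. j < m \<and> adj m j} \<le> card {j. j < n \<and> j \<noteq> m \<and> adj m j}"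
      by (rule card_mono[OF _ h]) simp
    also have "\<dots> \<le> D" using deg[of m] Suc.prems by simp
    finally show ?thesis .
  qed
  hence cF: "card F \<le> D" unfolding F_def
    using card_image_le[of "{j. j < m \<and> adj m j}" col] by simp
  have "\<not> {..<D+1} \<subseteq> F"
  proof
    assume "{..<D+1} \<subseteq> F"
    hence "card {..<D+1} \<le> card F" by (rule card_mono[rotated]) (simp add: F_def)
    thus False using cF by simp
  qed
  then obtain c where c: "c < D + 1" "c \<notin> F" by auto
  define col' where "col' = col(m := c)"
  have "\<forall>i<Suc m. col' i < D + 1" using c1 c by (simp add: col'_def less_Suc_eq)
  moreover have "\<forall>i<Suc m. \<forall>j<Suc m. i \<noteq> j \<and> col' i = col' j \<longrightarrow> \<not> adj i j"
  proof (intro allI impI)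
    fix i j assume ij: "i < Suc m" "j < Suc m" "i \<noteq> j \<and> col' i = col' j"
    show "\<not> adj i j"
    proof (cases "i = m")
      case True
      then show ?thesis using ij c unfolding col'_def F_def by auto
    next
      case False
      show ?thesis
      proof (cases "j = m")
        case True
        then show ?thesis using ij c False sym unfolding col'_def F_def by force
      next
        case False
        then show ?thesis using ij c2 \<open>i \<noteq> m\<close> unfolding col'_def by auto
      qed
    qed
  qed
  ultimately show ?case by blast
qed

theorem lemma4p5:
  fixes n :: nat and C :: "nat set set list" and supp :: "nat \<Rightarrow> nat set"
  assumes "valid_circuit n C"
    and "\<And>i. i < n \<Longrightarrow> supp i \<subseteq> lightcone C i"
  shows "\<exists>col :: nat \<Rightarrow> nat.
           (\<forall>i<n. col i < lightcone_size n C * 2 ^ length C + 1) \<and>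
           (\<forall>i<n. \<forall>j<n. i \<noteq> j \<and> col i = col j \<longrightarrow> supp i \<inter> supp j = {})"
proof -
  let ?adj = "\<lambda>i j. supp i \<inter> supp j \<noteq> {}"
  have deg: "card {j. j < n \<and> j \<noteq> i \<and> ?adj i j} \<le> lightcone_size n C * 2 ^ length C"
    if i: "i < n" for i
  proof -
    have finL: "finite (lightcone C i)"
      unfolding lightcone_def using reach_finite[OF assms(1)] by simp
    have sub: "{j. j < n \<and> j \<noteq> i \<and> ?adj i j} \<subseteq> (\<Union>q\<in>lightcone C i. bwd C q)"
    proof
      fix j assume j: "j \<in> {j. j < n \<and> j \<noteq> i \<and> ?adj i j}"
      then obtain q where q: "q \<in> supp i" "q \<in> supp j" by auto
      have "q \<in> lightcone C i" using q assms(2) i by blast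
      moreover have "q \<in> lightcone C j" using q assms(2) j by blast
      ultimately show "j \<in> (\<Union>q\<in>lightcone C i. bwd C q)"
        by (auto simp: back_iff lightcone_def)
    qed
    have finU: "finite (\<Union>q\<in>lightcone C i. bwd C q)"
      using finL back_card[OF assms(1)] by blast
    have "card {j. j < n \<and> j \<noteq> i \<and> ?adj i j} \<le> card (\<Union>q\<in>lightcone C i. bwd C q)"
      by (rule card_mono[OF finU sub])
    also have "\<dots> \<le> (\<Sum>q\<in>lightcone C i. card (bwd C q))" by (rule card_UN_le[OF finL])
    also have "\<dots> \<le> (\<Sum>q\<in>lightcone C i. 2 ^ length C)"
      by (rule sum_mono) (use back_card[OF assms(1)] in blast)
    also have "\<dots> = card (lightcone C i) * 2 ^ length C" by simp
    also have "\<dots> \<le> lightcone_size n C * 2 ^ length C"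
    proof -
      have "card (lightcone C i) \<le> lightcone_size n C"
        unfolding lightcone_size_def using i by (intro Max_ge) auto
      thus ?thesis by simp
    qed
    finally show ?thesis .
  qed
  have "\<exists>col :: nat \<Rightarrow> nat. (\<forall>i<n. col i < lightcone_size n C * 2 ^ length C + 1) \<and>
           (\<forall>i<n. \<forall>j<n. i \<noteq> j \<and> col i = col j \<longrightarrow> \<not> ?adj i j)"
    using greedy[where adj = ?adj and m = n and n = n and D = "lightcone_size n C * 2 ^ length C"] deg by blast
  then show ?thesis by auto
qed

end
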